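(* Let $f(x,y)=-x^3e^y(x+e^y)$ and consider the constrained system $$\ddot x+\Big(\frac{1}{x+e^y}+\frac3x\Big)\dot x^2=0,\qquad \ddot y+\Big(\frac{e^y}{x+e^y}+1\Big)\dot y^2=0,\qquad f(x,y)\dot x\dot y=E_0\neq0,$$ i.e. the non-null geodesics of the metric $\gamma_{12}=\gamma_{21}=f$, $\gamma_{11}=\gamma_{22}=0$, with $\gamma_{ab}\dot q^a\dot q^b=2E_0$. Then $$I_1=x^6(x+e^y)^2\dot x^2+\frac{E_0}{2}x^4$$ is a first integral of this constrained system. Moreover, along any solution with $I_1=0$ one has $E_0<0$, the orbit is $y=\ln(c_1x^2-2x)$ for a constant $c_1$, and $t=\pm\sqrt{-2/E_0}\,\big(\tfrac{c_1}{4}x^4-\tfrac{x^3}{3}\big)+t_0$ for a constant $t_0$.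
   Context: A first integral of the constrained system is a function whose time derivative vanishes along every solution of the three displayed equations. The metric here is defined on the region where $f\neq0$. *)

theory Defs
  imports "HOL-Analysis.Analysis"
begin

definition fmet :: "real \<Rightarrow> real \<Rightarrow> real" where
  "fmet x y = - (x ^ 3) * exp y * (x + exp y)"

definition I1 :: "real \<Rightarrow> real \<Rightarrow> real \<Rightarrow> real \<Rightarrow> real" where
  "I1 E0 x y xd = x ^ 6 * (x + exp y) ^ 2 * xd ^ 2 + E0 / 2 * x ^ 4"

end

theory Submission
  imports Defs
begin

lemma const_of_deriv:
  fixes F :: "real \<Rightarrow> real"
  assumes "open J" "connected J" "\<And>t. t \<in> J \<Longrightarrow> (F has_real_derivative 0) (at t)"
  shows "\<exists>c. \<forall>t\<in>J. F t = c"
proof -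
  have "continuous_on J F"
    using assms(3) by (meson DERIV_isCont continuous_at_imp_continuous_on)
  then obtain c where "\<And>t. t \<in> J \<Longrightarrow> F t = c"
    using DERIV_zero_connected_constant[of J "{}" F] assms by auto
  then show ?thesis by auto
qed

lemma dI1:
  fixes x y x' x'' y' :: "real \<Rightarrow> real" and t E0 :: real
  assumes dx: "(x has_real_derivative x' t) (at t)"
    and dx': "(x' has_real_derivative x'' t) (at t)"
    and dy: "(y has_real_derivative y' t) (at t)"
  shows "((\<lambda>t. I1 E0 (x t) (y t) (x' t)) has_real_derivative
     6*x t^5*x' t*(x t + exp (y t))^2*x' t^2 + x t^6*(2*(x t + exp (y t))*(x' t + exp (y t) * y' t))*x' t^2
     + x t^6*(x t + exp (y t))^2*(2*x' t*x'' t) + E0/2*(4*x t^3*x' t)) (at t)"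
  unfolding I1_def
  by (rule derivative_eq_intros dx dx' dy refl | simp add: algebra_simps)+

lemma dC:
  fixes x y x' y' :: "real \<Rightarrow> real" and t :: real
  assumes dx: "(x has_real_derivative x' t) (at t)"
    and dy: "(y has_real_derivative y' t) (at t)" and nz: "x t \<noteq> 0"
  shows "((\<lambda>t. (exp (y t) + 2 * x t) / x t ^ 2) has_real_derivative
     ((exp (y t) * y' t + 2 * x' t) * x t ^ 2 - (exp (y t) + 2 * x t) * (2 * x t * x' t)) / (x t ^ 2) ^ 2) (at t)"
  using nz
  by (auto intro!: derivative_eq_intros dx dy)

lemma dG:
  fixes x x' :: "real \<Rightarrow> real" and t c1 k :: real
  assumes dx: "(x has_real_derivative x' t) (at t)"
  shows "((\<lambda>t. t - k * (c1 / 4 * (x t) ^ 4 - (x t) ^ 3 / 3)) has_real_derivative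
     1 - k * ((c1 * x t ^ 3 - x t ^ 2) * x' t)) (at t)"
  by (auto intro!: derivative_eq_intros dx simp: algebra_simps)
lemma alg1:
  fixes X U X' E Y' :: real assumes "X\<noteq>0" "U\<noteq>0"
  shows "6*X^5*X'*U^2*X'^2 + X^6*(2*U*(X' + E*Y'))*X'^2 + X^6*U^2*(2*X'*(-(1/U+3/X)*X'^2)) + (-(E*Y'*X^3*U*X'))/2*(4*X^3*X') = 0"
proof -
  have a: "1/U+3/X = (X + 3*U)/(U*X)" using assms by (simp add: field_simps)
  have b: "X^6*U^2*(2*X'*(-((X + 3*U)/(U*X))*X'^2)) = -(2*X^6*U*X'^3 + 6*X^5*U^2*X'^3)"
  proof -
    have "X^6*U^2*(2*X'*(-((X + 3*U)/(U*X))*X'^2)) = -(X^5*U*(2*X'*(X + 3*U)*X'^2))"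
      using assms by (simp add: power2_eq_square eval_nat_numeral)
    then show ?thesis by (simp add: algebra_simps eval_nat_numeral)
  qed
  show ?thesis unfolding a b by (simp add: algebra_simps eval_nat_numeral)
qed

theorem mainTheorem9:
  fixes x y x' y' x'' y'' :: "real \<Rightarrow> real" and J :: "real set" and E0 :: real
  assumes J: "open J" "connected J" "J \<noteq> {}"
    and dx: "\<And>t. t \<in> J \<Longrightarrow> (x has_real_derivative x' t) (at t)"
    and dx': "\<And>t. t \<in> J \<Longrightarrow> (x' has_real_derivative x'' t) (at t)"
    and dy: "\<And>t. t \<in> J \<Longrightarrow> (y has_real_derivative y' t) (at t)"
    and dy': "\<And>t. t \<in> J \<Longrightarrow> (y' has_real_derivative y'' t) (at t)"
    and reg: "\<And>t. t \<in> J \<Longrightarrow> fmet (x t) (y t) \<noteq> 0"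
    and eqx: "\<And>t. t \<in> J \<Longrightarrow>
       x'' t + (1 / (x t + exp (y t)) + 3 / x t) * (x' t) ^ 2 = 0"
    and eqy: "\<And>t. t \<in> J \<Longrightarrow>
       y'' t + (exp (y t) / (x t + exp (y t)) + 1) * (y' t) ^ 2 = 0"
    and constr: "\<And>t. t \<in> J \<Longrightarrow> fmet (x t) (y t) * x' t * y' t = E0"
    and E0: "E0 \<noteq> 0"
  shows "(\<exists>C. \<forall>t\<in>J. I1 E0 (x t) (y t) (x' t) = C)
    \<and> ((\<forall>t\<in>J. I1 E0 (x t) (y t) (x' t) = 0) \<longrightarrow>
         E0 < 0
       \<and> (\<exists>c1. (\<forall>t\<in>J. c1 * (x t) ^ 2 - 2 * x t > 0
                       \<and> y t = ln (c1 * (x t) ^ 2 - 2 * x t))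
             \<and> (\<exists>t0. \<exists>\<sigma>\<in>{-1, 1::real}. \<forall>t\<in>J.
                  t = \<sigma> * sqrt (- 2 / E0) * (c1 / 4 * (x t) ^ 4 - (x t) ^ 3 / 3) + t0)))"
proof -
  have xne: "x t \<noteq> 0" and une: "x t + exp (y t) \<noteq> 0" if "t \<in> J" for t
    using reg[OF that] by (auto simp: fmet_def)
  have h1: "exp (y t) * y' t * x t ^ 3 * (x t + exp (y t)) * x' t = - E0" if "t \<in> J" for t
    using constr[OF that] by (auto simp: fmet_def algebra_simps)
  have part1: "\<exists>C. \<forall>t\<in>J. I1 E0 (x t) (y t) (x' t) = C"
  proof (rule const_of_deriv[OF J(1,2)])
    fix t assume t: "t \<in> J"
    define u where "u = x t + exp (y t)"
    have x'': "x'' t = - (1 / u + 3 / x t) * (x' t) ^ 2"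
      using eqx[OF t] unfolding u_def by (simp add: algebra_simps)
    have E0eq: "E0 = - (exp (y t) * y' t * x t ^ 3 * u * x' t)"
      using h1[OF t] unfolding u_def by simp
    have "6*x t^5*x' t*u^2*x' t^2 + x t^6*(2*u*(x' t + exp (y t) * y' t))*x' t^2
     + x t^6*u^2*(2*x' t*x'' t) + E0/2*(4*x t^3*x' t) = 0"
      unfolding x''
      apply (subst E0eq)
      using alg1[OF xne[OF t] une[OF t, folded u_def], of "x' t" "exp (y t)" "y' t"]
      by simp
    then show "((\<lambda>t. I1 E0 (x t) (y t) (x' t)) has_real_derivative 0) (at t)"
      using dI1[where x=x and y=y and x'=x' and x''=x'' and y'=y' and t=t and ?E0.0=E0, OF dx[OF t] dx'[OF t] dy[OF t]] unfolding u_def by simp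
  qed
  show ?thesis
  proof (intro conjI part1 impI)
    assume Z: "\<forall>t\<in>J. I1 E0 (x t) (y t) (x' t) = 0"
    have h2: "(x t * (x t + exp (y t)) * x' t)^2 = - E0 / 2" if t: "t \<in> J" for t
    proof -
      have "x t ^ 4 * ((x t * (x t + exp (y t)) * x' t)^2 + E0/2) = 0"
      proof -
        have "I1 E0 (x t) (y t) (x' t) = 0" using Z t by blast
        then show ?thesis unfolding I1_def by (simp add: algebra_simps power2_eq_square eval_nat_numeral)
      qed
      then show ?thesis using xne[OF t] by simp
    qed
    have x'ne: "x' t \<noteq> 0" if t: "t \<in> J" for t
      using h1[OF t] E0 by auto
    obtain t1 where t1: "t1 \<in> J" using J(3) by auto
    have "(x t1 * (x t1 + exp (y t1)) * x' t1)^2 > 0"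
      using xne[OF t1] une[OF t1] x'ne[OF t1] by simp
    then show "E0 < 0" using h2[OF t1] by simp
    then have E0n: "E0 < 0" .
    define k where "k = sqrt (- E0 / 2)"
    have kpos: "k > 0" unfolding k_def using E0n by simp
    have ksq: "k^2 = - E0/2" unfolding k_def using E0n by simp
    define w where "w t = x t * (x t + exp (y t)) * x' t" for t
    have wsq: "w t = k \<or> w t = - k" if "t \<in> J" for t
    proof -
      have "w t ^ 2 = k ^ 2" using h2[OF that] ksq unfolding w_def by simp
      then show ?thesis using power2_eq_iff by blast
    qed
    have key: "exp (y t) * y' t * x t = 2 * x' t * (x t + exp (y t))" if t: "t \<in> J" for t
    proof -
      have nz: "x t ^ 2 * (x t + exp (y t)) * x' t \<noteq> 0"
        using xne[OF t] une[OF t] x'ne[OF t] by simp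
      have "(exp (y t) * y' t * x t) * (x t ^ 2 * (x t + exp (y t)) * x' t)
          = (2 * x' t * (x t + exp (y t))) * (x t ^ 2 * (x t + exp (y t)) * x' t)"
      proof -
        have "(exp (y t) * y' t * x t) * (x t ^ 2 * (x t + exp (y t)) * x' t) = exp (y t) * y' t * x t ^ 3 * (x t + exp (y t)) * x' t"
          by (simp add: power2_eq_square power3_eq_cube)
        also have "\<dots> = - E0" using h1[OF t] .
        also have "\<dots> = 2 * (x t * (x t + exp (y t)) * x' t)^2" using h2[OF t] by simp
        also have "\<dots> = (2 * x' t * (x t + exp (y t))) * (x t ^ 2 * (x t + exp (y t)) * x' t)"
          by (simp add: power2_eq_square)
        finally show ?thesis .
      qed
      then show ?thesis using nz by simp
    qed
    obtain c1 where c1: "\<forall>t\<in>J. (exp (y t) + 2 * x t) / x t ^ 2 = c1"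
    proof -
      have "\<exists>c. \<forall>t\<in>J. (exp (y t) + 2 * x t) / x t ^ 2 = c"
      proof (rule const_of_deriv[OF J(1,2)])
        fix t assume t: "t \<in> J"
        have "((exp (y t) * y' t + 2 * x' t) * x t ^ 2 - (exp (y t) + 2 * x t) * (2 * x t * x' t))
            = x t * (exp (y t) * y' t * x t - 2 * x' t * (x t + exp (y t)))"
          by (simp add: algebra_simps power2_eq_square)
        also have "\<dots> = 0" using key[OF t] by simp
        finally show "((\<lambda>t. (exp (y t) + 2 * x t) / x t ^ 2) has_real_derivative 0) (at t)"
          using dC[where x=x and y=y and x'=x' and y'=y' and t=t, OF dx[OF t] dy[OF t] xne[OF t]] by simp
      qed
      then show ?thesis using that by blast
    qed
    have ey: "exp (y t) = c1 * x t ^ 2 - 2 * x t" if t: "t \<in> J" for t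
      using c1 t xne[OF t] by (auto simp: field_simps)
    show "\<exists>c1. (\<forall>t\<in>J. c1 * (x t) ^ 2 - 2 * x t > 0
                       \<and> y t = ln (c1 * (x t) ^ 2 - 2 * x t))
             \<and> (\<exists>t0. \<exists>\<sigma>\<in>{-1, 1::real}. \<forall>t\<in>J.
                  t = \<sigma> * sqrt (- 2 / E0) * (c1 / 4 * (x t) ^ 4 - (x t) ^ 3 / 3) + t0)"
    proof (rule exI[of _ c1], rule conjI)
      show "\<forall>t\<in>J. c1 * (x t) ^ 2 - 2 * x t > 0 \<and> y t = ln (c1 * (x t) ^ 2 - 2 * x t)"
      proof
        fix t assume t: "t \<in> J"
        show "c1 * (x t) ^ 2 - 2 * x t > 0 \<and> y t = ln (c1 * (x t) ^ 2 - 2 * x t)"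
          using ey[OF t, symmetric] by simp
      qed
      define \<sigma> :: real where "\<sigma> = (if w t1 > 0 then 1 else -1)"
      have cont: "continuous_on J w"
      proof -
        have "isCont w t" if t: "t \<in> J" for t
          unfolding w_def
          using DERIV_isCont[OF dx[OF t]] DERIV_isCont[OF dy[OF t]] DERIV_isCont[OF dx'[OF t]]
          by (intro continuous_intros) auto
        then show ?thesis by (simp add: continuous_at_imp_continuous_on)
      qed
      have conn: "connected (w ` J)" using connected_continuous_image[OF cont J(2)] .
      have wsig: "w t = \<sigma> * k" if t: "t \<in> J" for t
      proof (rule ccontr)
        assume ne: "w t \<noteq> \<sigma> * k"
        have wt: "w t \<in> w ` J" "w t1 \<in> w ` J" using t t1 by auto
        have iv: "\<And>a b z. a \<in> w ` J \<Longrightarrow> b \<in> w ` J \<Longrightarrow> a \<le> z \<Longrightarrow> z \<le> b \<Longrightarrow> z \<in> w ` J"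
          using conn unfolding connected_iff_interval by blast
        have "0 \<in> w ` J"
        proof (cases "w t1 > 0")
          case True
          then have "w t1 = k" "w t = -k" using wsq[OF t1] wsq[OF t] ne kpos unfolding \<sigma>_def by auto
          then show ?thesis using iv[of "w t" "w t1" 0] wt kpos by (auto simp: wt)
        next
          case False
          then have "w t1 = -k" "w t = k" using wsq[OF t1] wsq[OF t] ne kpos unfolding \<sigma>_def by auto
          then show ?thesis using iv[of "w t1" "w t" 0] wt kpos by (auto simp: wt)
        qed
        then obtain s where s: "s \<in> J" "w s = 0" by auto
        then show False using wsq[OF s(1)] kpos by auto
      qed
      have sig2: "\<sigma> * \<sigma> = 1" unfolding \<sigma>_def by simp
      have sq: "sqrt (- 2 / E0) = 1 / k"
      proof -
        have "- 2 / E0 = inverse (- E0 / 2)" by simp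
        then have "sqrt (- 2 / E0) = inverse (sqrt (- E0 / 2))" by (simp only: real_sqrt_inverse)
        then show ?thesis unfolding k_def by (simp add: inverse_eq_divide)
      qed
      obtain t0 where t0: "\<forall>t\<in>J. t - (\<sigma> / k) * (c1 / 4 * (x t) ^ 4 - (x t) ^ 3 / 3) = t0"
      proof -
        have "\<exists>c. \<forall>t\<in>J. t - (\<sigma> / k) * (c1 / 4 * (x t) ^ 4 - (x t) ^ 3 / 3) = c"
        proof (rule const_of_deriv[OF J(1,2)])
          fix t assume t: "t \<in> J"
          have "(c1 * x t ^ 3 - x t ^ 2) * x' t = w t"
          proof -
            have "c1 * x t ^ 3 = x t * (c1 * x t ^ 2)" by (simp add: power2_eq_square power3_eq_cube)
            also have "\<dots> = x t * (exp (y t) + 2 * x t)" using ey[OF t] by simp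
            finally have "c1 * x t ^ 3 = x t * (exp (y t) + 2 * x t)" .
            then show ?thesis unfolding w_def by (simp add: algebra_simps power2_eq_square)
          qed
          then have z: "1 - (\<sigma> / k) * ((c1 * x t ^ 3 - x t ^ 2) * x' t) = 0"
            using wsig[OF t] kpos sig2 by simp
          show "((\<lambda>t. t - (\<sigma> / k) * (c1 / 4 * (x t) ^ 4 - (x t) ^ 3 / 3)) has_real_derivative 0) (at t)"
            using dG[where x=x and x'=x' and t=t and k="\<sigma> / k" and ?c1.0=c1, OF dx[OF t]] unfolding z .
        qed
        then show ?thesis using that by blast
      qed
      show "\<exists>t0. \<exists>\<sigma>\<in>{-1, 1::real}. \<forall>t\<in>J.
                  t = \<sigma> * sqrt (- 2 / E0) * (c1 / 4 * (x t) ^ 4 - (x t) ^ 3 / 3) + t0"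
      proof (rule exI[of _ t0], rule bexI[of _ \<sigma>], rule ballI)
        fix t assume "t \<in> J"
        then show "t = \<sigma> * sqrt (- 2 / E0) * (c1 / 4 * (x t) ^ 4 - (x t) ^ 3 / 3) + t0"
          using t0 sq by (auto simp: algebra_simps)
      next
        show "\<sigma> \<in> {-1, 1}" unfolding \<sigma>_def by simp
      qed
    qed
  qed
qed

end
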